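(* Let $E_1,\dots,E_{N_B}$ be real numbers linearly independent over $\mathbb Q$, $d_1,\dots,d_{N_B}>0$, $\chi(t)=\sum_{j=1}^{N_B}d_je^{-itE_j}$ and $I_k=\overline{|\chi(t)|^{2k}}$ ($I_0=1$). Then for every complex $z$, $$\sum_{k=0}^\infty\frac{I_k}{(k!)^2}z^k=\overline{I_0\big(2|\chi(t)|\sqrt z\big)}=\prod_{i=1}^{N_B}I_0\big(2d_i\sqrt z\big),$$ where $I_0$ is the modified Bessel function of the first kind. In particular, the quantities $I_k/k!$ are the moments of a sequence whose cumulants are $a_nX_n$, with $a_n$ defined by $\ln I_0(2\sqrt z)=\sum_{n\ge1}a_nz^n/n!$ and $X_n=\sum_{i=1}^{N_B}d_i^{2n}$.
   Context: $\overline{f(t)}:=\lim_{T\to\infty}\frac1T\int_0^Tf(t)\,dt$. Note $I_0(2\sqrt z)=\sum_{n\ge0}z^n/(n!)^2$ is entire in $z$. *)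

theory Defs
  imports "HOL-Analysis.Analysis" "HOL-Computational_Algebra.Formal_Power_Series"
begin

definition avg_T :: "(real \<Rightarrow> 'a::real_normed_vector) \<Rightarrow> real \<Rightarrow> 'a" where
  "avg_T f T = (1 / T) *\<^sub>R integral {0..T} f"

definition time_avg :: "(real \<Rightarrow> 'a::real_normed_vector) \<Rightarrow> 'a" where
  "time_avg f = Lim at_top (avg_T f)"

text \<open>I0s w = sum_n w^n/(n!)^2, i.e. I0s w = I_0(2 sqrt w) (entire in w).\<close>
definition I0s :: "complex \<Rightarrow> complex" where
  "I0s w = (\<Sum>n. w ^ n / (of_nat (fact n))\<^sup>2)"

definition chi :: "nat \<Rightarrow> (nat \<Rightarrow> real) \<Rightarrow> (nat \<Rightarrow> real) \<Rightarrow> real \<Rightarrow> complex" where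
  "chi N d E t = (\<Sum>j<N. complex_of_real (d j) * exp (- \<i> * complex_of_real (t * E j)))"

text \<open>Formal logarithm of a power series with constant term 1: ln(1 + (M - 1)).\<close>
definition fps_log :: "real fps \<Rightarrow> real fps" where
  "fps_log M = fps_compose (fps_ln 1) (M - 1)"

text \<open>Cumulants of a moment sequence m (with m 0 = 1): the cumulant generating function
  sum_n kappa_n z^n/n! is the (formal) logarithm of the moment generating function sum_k m_k z^k/k!.\<close>
definition cumulant :: "(nat \<Rightarrow> real) \<Rightarrow> nat \<Rightarrow> real" where
  "cumulant m n = fact n * fps_nth (fps_log (Abs_fps (\<lambda>k. m k / fact k))) n"

text \<open>a_n defined by ln I_0(2 sqrt z) = sum_{n>=1} a_n z^n/n!, where I_0(2 sqrt z) = sum_k z^k/(k!)^2.\<close>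
definition a_coef :: "nat \<Rightarrow> real" where
  "a_coef n = fact n * fps_nth (fps_log (Abs_fps (\<lambda>k. 1 / (fact k)\<^sup>2))) n"

end

theory Submission
  imports Defs "HOL-Real_Asymp.Real_Asymp"
begin


lemma avg_T_sum:
  fixes f :: "'i \<Rightarrow> real \<Rightarrow> complex"
  assumes "finite F" "\<And>x. x \<in> F \<Longrightarrow> continuous_on UNIV (f x)"
  shows "avg_T (\<lambda>t. \<Sum>x\<in>F. f x t) T = (\<Sum>x\<in>F. avg_T (f x) T)"
proof -
  have "integral {0..T} (\<lambda>t. \<Sum>x\<in>F. f x t) = (\<Sum>x\<in>F. integral {0..T} (f x))"
    by (rule integral_sum) (auto intro!: integrable_continuous_real continuous_on_subset[OF assms(2)] assms(1))
  then show ?thesis unfolding avg_T_def by (simp add: scaleR_sum_right)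
qed

lemma avg_T_cmult:
  fixes f :: "real \<Rightarrow> complex"
  shows "avg_T (\<lambda>t. c * f t) T = c * avg_T f T"
  unfolding avg_T_def by (simp add: integral_mult_right scaleR_conv_of_real)

lemma avg_T_of_real:
  fixes f :: "real \<Rightarrow> real"
  assumes "continuous_on UNIV f"
  shows "avg_T (\<lambda>t. complex_of_real (f t)) T = complex_of_real (avg_T f T)"
proof -
  have "integral {0..T} (\<lambda>t. complex_of_real (f t)) = complex_of_real (integral {0..T} f)"
    using integral_linear[OF integrable_continuous_real[OF continuous_on_subset[OF assms]] bounded_linear_of_real, of 0 T]
    by (simp add: o_def)
  then show ?thesis unfolding avg_T_def by (simp add: scaleR_conv_of_real)
qed

lemma avg_T_bound:
  fixes f :: "real \<Rightarrow> 'a::banach"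
  assumes "continuous_on UNIV f" "\<And>t. norm (f t) \<le> B" "T > 0"
  shows "norm (avg_T f T) \<le> B"
proof -
  have B: "0 \<le> B" using assms(2)[of 0] norm_ge_zero order_trans by blast
  have "(f has_integral integral {0..T} f) {0..T}"
    by (auto intro!: integrable_integral integrable_continuous_real continuous_on_subset[OF assms(1)])
  from has_integral_bound_real[OF B finite.emptyI this] assms(2,3)
  have "norm (integral {0..T} f) \<le> B * T" by simp
  then show ?thesis using assms(3) unfolding avg_T_def by (simp add: field_simps)
qed

lemma avg_T_exp:
  fixes \<mu> :: real
  shows "(avg_T (\<lambda>t. exp (\<i> * complex_of_real (t * \<mu>))) \<longlongrightarrow> (if \<mu> = 0 then 1 else 0)) at_top"
proof (cases "\<mu> = 0")
  case True
  have "eventually (\<lambda>T. avg_T (\<lambda>t. exp (\<i> * complex_of_real (t * \<mu>))) T = 1) at_top"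
    using eventually_gt_at_top[of 0] by eventually_elim (simp add: True avg_T_def)
  then show ?thesis using True by (simp add: tendsto_eventually)
next
  case False
  define F where "F t = exp (\<i> * complex_of_real (t * \<mu>)) / (\<i> * complex_of_real \<mu>)" for t
  have d: "(F has_vector_derivative exp (\<i> * complex_of_real (t * \<mu>))) (at t within X)" for t X
  proof -
    have "((\<lambda>w. exp (w * (\<i> * complex_of_real \<mu>)) / (\<i> * complex_of_real \<mu>)) has_field_derivative
          exp (complex_of_real t * (\<i> * complex_of_real \<mu>))) (at (complex_of_real t))"
      using False by (auto intro!: derivative_eq_intros)
    from has_vector_derivative_real_field[OF this, of X] show ?thesis
      unfolding F_def by (simp add: mult_ac)
  qed
  have I: "integral {0..T} (\<lambda>t. exp (\<i> * complex_of_real (t * \<mu>))) = F T - F 0" if "T \<ge> 0" for T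
    using fundamental_theorem_of_calculus[OF that, of F] d by (simp add: integral_unique)
  have nF: "norm (F t) = 1 / \<bar>\<mu>\<bar>" for t
    unfolding F_def by (simp add: norm_divide norm_mult)
  show ?thesis
  proof -
    have "((\<lambda>T. 2 / \<bar>\<mu>\<bar> / T) \<longlongrightarrow> 0) at_top" by real_asymp
    moreover have "eventually (\<lambda>T. norm (avg_T (\<lambda>t. exp (\<i> * complex_of_real (t * \<mu>))) T) \<le> 2 / \<bar>\<mu>\<bar> / T) at_top"
      using eventually_gt_at_top[of 0]
    proof eventually_elim
      case (elim T)
      have "norm (F T - F 0) \<le> norm (F T) + norm (F 0)" by (rule norm_triangle_ineq4)
      also have "\<dots> = 2 / \<bar>\<mu>\<bar>" by (simp add: nF)
      finally have "norm (F T - F 0) / T \<le> 2 / \<bar>\<mu>\<bar> / T" using elim by (metis divide_right_mono less_imp_le)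
      moreover have "norm (avg_T (\<lambda>t. exp (\<i> * complex_of_real (t * \<mu>))) T) = norm (F T - F 0) / T"
        using elim unfolding avg_T_def I[OF less_imp_le[OF elim]] by simp
      ultimately show ?case by simp
    qed
    ultimately show ?thesis using False by (simp add: Lim_null_comparison)
  qed
qed



lemma exp_combine:
  "exp (- \<i> * complex_of_real (t * e)) ^ m1 * exp (\<i> * complex_of_real (t * e)) ^ m2 * exp (\<i> * complex_of_real (t * \<mu>))
   = exp (\<i> * complex_of_real (t * (\<mu> + (real m2 - real m1) * e)))"
proof -
  have "exp (- \<i> * complex_of_real (t * e)) ^ m1 * exp (\<i> * complex_of_real (t * e)) ^ m2 * exp (\<i> * complex_of_real (t * \<mu>))
    = exp (of_nat m1 * (- \<i> * complex_of_real (t * e))) * exp (of_nat m2 * (\<i> * complex_of_real (t * e))) * exp (\<i> * complex_of_real (t * \<mu>))"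
    by (simp only: exp_of_nat_mult)
  also have "\<dots> = exp (of_nat m1 * (- \<i> * complex_of_real (t * e)) + of_nat m2 * (\<i> * complex_of_real (t * e)) + \<i> * complex_of_real (t * \<mu>))"
    by (simp only: exp_add)
  also have "\<dots> = exp (\<i> * complex_of_real (t * (\<mu> + (real m2 - real m1) * e)))"
    by (rule arg_cong[where f=exp]) (simp add: algebra_simps)
  finally show ?thesis .
qed

definition Gf :: "nat \<Rightarrow> (nat\<Rightarrow>real) \<Rightarrow> (nat\<Rightarrow>real) \<Rightarrow> nat \<Rightarrow> nat \<Rightarrow> real \<Rightarrow> real \<Rightarrow> complex" where
  "Gf n d E p q \<mu> t = chi n d E t ^ p * cnj (chi n d E t) ^ q * exp (\<i> * complex_of_real (t * \<mu>))"

lemma chi_Suc: "chi (Suc n) d E t = chi n d E t + complex_of_real (d n) * exp (- \<i> * complex_of_real (t * E n))"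
  by (simp add: chi_def)

lemma cnj_a: "cnj (complex_of_real r * exp (- \<i> * complex_of_real x)) = complex_of_real r * exp (\<i> * complex_of_real x)"
proof -
  have "cnj (exp (- \<i> * complex_of_real x)) = exp (cnj (- \<i> * complex_of_real x))" by (rule exp_cnj)
  then show ?thesis by simp
qed

lemma Gf_Suc: "Gf (Suc n) d E k l \<mu> t = (\<Sum>p\<le>k. \<Sum>q\<le>l. complex_of_real (real (k choose p) * real (l choose q) * d n ^ ((k-p)+(l-q)))
      * Gf n d E p q (\<mu> + (real (l-q) - real (k-p)) * E n) t)"
proof -
  define X where "X = chi n d E t"
  define a where "a = exp (- \<i> * complex_of_real (t * E n))"
  define b where "b = exp (\<i> * complex_of_real (t * E n))"
  define c where "c = exp (\<i> * complex_of_real (t * \<mu>))"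
  define D where "D = complex_of_real (d n)"
  have hb: "cnj a = b" unfolding a_def b_def using cnj_a[of 1 "t * E n"] by simp
  have "Gf (Suc n) d E k l \<mu> t = (X + D * a) ^ k * (cnj (X + D * a)) ^ l * c"
    unfolding Gf_def chi_Suc X_def a_def c_def D_def by simp
  also have "\<dots> = (X + D * a) ^ k * (cnj X + D * b) ^ l * c"
    by (simp add: hb D_def)
  also have "\<dots> = (\<Sum>p\<le>k. of_nat (k choose p) * X ^ p * (D * a) ^ (k - p)) * (\<Sum>q\<le>l. of_nat (l choose q) * cnj X ^ q * (D * b) ^ (l - q)) * c"
    by (simp add: binomial_ring)
  also have "\<dots> = (\<Sum>p\<le>k. \<Sum>q\<le>l. (of_nat (k choose p) * X ^ p * (D * a) ^ (k - p)) * (of_nat (l choose q) * cnj X ^ q * (D * b) ^ (l - q)) * c)"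
    by (simp add: sum_distrib_left sum_distrib_right mult.assoc sum.swap[of _ "{..l}"])
  also have "\<dots> = (\<Sum>p\<le>k. \<Sum>q\<le>l. complex_of_real (real (k choose p) * real (l choose q) * d n ^ ((k-p)+(l-q)))
      * Gf n d E p q (\<mu> + (real (l-q) - real (k-p)) * E n) t)"
  proof (intro sum.cong refl)
    fix p q
    have "(of_nat (k choose p) * X ^ p * (D * a) ^ (k - p)) * (of_nat (l choose q) * cnj X ^ q * (D * b) ^ (l - q)) * c
      = complex_of_real (real (k choose p) * real (l choose q) * d n ^ ((k-p)+(l-q))) * (X ^ p * cnj X ^ q * (a ^ (k-p) * b ^ (l-q) * c))"
      by (simp add: D_def power_mult_distrib power_add mult_ac)
    also have "a ^ (k-p) * b ^ (l-q) * c = exp (\<i> * complex_of_real (t * (\<mu> + (real (l-q) - real (k-p)) * E n)))"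
      unfolding a_def b_def c_def by (rule exp_combine)
    finally show "(of_nat (k choose p) * X ^ p * (D * a) ^ (k - p)) * (of_nat (l choose q) * cnj X ^ q * (D * b) ^ (l - q)) * c
      = complex_of_real (real (k choose p) * real (l choose q) * d n ^ ((k-p)+(l-q))) * Gf n d E p q (\<mu> + (real (l-q) - real (k-p)) * E n) t"
      unfolding Gf_def X_def by simp
  qed
  finally show ?thesis .
qed

lemma continuous_Gf: "continuous_on UNIV (Gf n d E p q \<mu>)"
  unfolding Gf_def chi_def by (intro continuous_intros)



lemma avg_T_Gf_Suc: "avg_T (Gf (Suc n) d E k l \<mu>) T = (\<Sum>p\<le>k. \<Sum>q\<le>l. complex_of_real (real (k choose p) * real (l choose q) * d n ^ ((k-p)+(l-q)))
      * avg_T (Gf n d E p q (\<mu> + (real (l-q) - real (k-p)) * E n)) T)"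
proof -
  have "avg_T (Gf (Suc n) d E k l \<mu>) T = avg_T (\<lambda>t. \<Sum>p\<le>k. \<Sum>q\<le>l. complex_of_real (real (k choose p) * real (l choose q) * d n ^ ((k-p)+(l-q)))
      * Gf n d E p q (\<mu> + (real (l-q) - real (k-p)) * E n) t) T"
    by (rule arg_cong[where f="\<lambda>f. avg_T f T"], rule ext, rule Gf_Suc)
  also have "\<dots> = (\<Sum>p\<le>k. avg_T (\<lambda>t. \<Sum>q\<le>l. complex_of_real (real (k choose p) * real (l choose q) * d n ^ ((k-p)+(l-q)))
      * Gf n d E p q (\<mu> + (real (l-q) - real (k-p)) * E n) t) T)"
    by (rule avg_T_sum) (auto intro!: continuous_intros continuous_on_mult continuous_Gf)
  also have "\<dots> = (\<Sum>p\<le>k. \<Sum>q\<le>l. avg_T (\<lambda>t. complex_of_real (real (k choose p) * real (l choose q) * d n ^ ((k-p)+(l-q)))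
      * Gf n d E p q (\<mu> + (real (l-q) - real (k-p)) * E n) t) T)"
    by (intro sum.cong refl avg_T_sum) (auto intro!: continuous_intros continuous_on_mult continuous_Gf)
  also have "\<dots> = (\<Sum>p\<le>k. \<Sum>q\<le>l. complex_of_real (real (k choose p) * real (l choose q) * d n ^ ((k-p)+(l-q)))
      * avg_T (Gf n d E p q (\<mu> + (real (l-q) - real (k-p)) * E n)) T)"
    by (simp only: avg_T_cmult)
  finally show ?thesis .
qed

definition Sp :: "(nat\<Rightarrow>real) \<Rightarrow> nat \<Rightarrow> real set" where
  "Sp E n = {x. \<exists>q::nat\<Rightarrow>rat. x = (\<Sum>j<n. of_rat (q j) * E j)}"

lemma Sp_step:
  assumes "\<mu> + (real m2 - real m1) * E n \<in> Sp E n"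
  shows "\<mu> \<in> Sp E (Suc n)"
proof -
  obtain q where q: "\<mu> + (real m2 - real m1) * E n = (\<Sum>j<n. of_rat (q j) * E j)"
    using assms unfolding Sp_def by auto
  define q' where "q' = q(n := of_nat m1 - of_nat m2)"
  have "(\<Sum>j<Suc n. of_rat (q' j) * E j) = (\<Sum>j<n. of_rat (q j) * E j) + (real m1 - real m2) * E n"
    unfolding q'_def by (simp add: of_rat_diff)
  also have "\<dots> = \<mu>" using q by (simp add: algebra_simps)
  finally show ?thesis unfolding Sp_def by (auto intro!: exI[of _ q'])
qed

lemma avg_G_zero:
  assumes "\<mu> \<notin> Sp E n"
  shows "(avg_T (Gf n d E p q \<mu>) \<longlongrightarrow> 0) at_top"
  using assms
proof (induction n arbitrary: p q \<mu>)
  case 0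
  have mu: "\<mu> \<noteq> 0" using 0 unfolding Sp_def by auto
  show ?case
  proof (cases "p = 0 \<and> q = 0")
    case True
    then have "Gf 0 d E p q \<mu> = (\<lambda>t. exp (\<i> * complex_of_real (t * \<mu>)))"
      by (auto simp: Gf_def)
    then show ?thesis using avg_T_exp[of \<mu>] mu by simp
  next
    case False
    then have "Gf 0 d E p q \<mu> = (\<lambda>t. 0)"
      by (auto simp: Gf_def chi_def fun_eq_iff)
    then show ?thesis by (simp add: avg_T_def)
  qed
next
  case (Suc n)
  show ?case
    unfolding avg_T_Gf_Suc
    by (intro tendsto_null_sum tendsto_mult_right_zero Suc.IH)
       (use Suc.prems Sp_step in blast)
qed



fun Jf :: "(nat\<Rightarrow>real) \<Rightarrow> nat \<Rightarrow> nat \<Rightarrow> real" where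
  "Jf d 0 k = (if k = 0 then 1 else 0)"
| "Jf d (Suc n) k = (\<Sum>p\<le>k. real (k choose p) * real (k choose p) * d n ^ ((k-p)+(k-p)) * Jf d n p)"

lemma linindep_Sp:
  fixes E :: "nat \<Rightarrow> real"
  assumes linindep: "\<And>q :: nat \<Rightarrow> rat. (\<Sum>j<N. of_rat (q j) * E j) = 0 \<Longrightarrow> (\<forall>j<N. q j = 0)"
    and "n < N" "ma \<noteq> mb"
  shows "(real mb - real ma) * E n \<notin> Sp E n"
proof
  assume "(real mb - real ma) * E n \<in> Sp E n"
  then obtain q where q: "(real mb - real ma) * E n = (\<Sum>j<n. of_rat (q j) * E j)"
    unfolding Sp_def by auto
  define q' where "q' j = (if j < n then q j else if j = n then of_nat ma - of_nat mb else 0)" for j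
  have "(\<Sum>j<N. of_rat (q' j) * E j) = (\<Sum>j<Suc n. of_rat (q' j) * E j)"
    by (rule sum.mono_neutral_right) (use assms(2) in \<open>auto simp: q'_def\<close>)
  also have "\<dots> = (\<Sum>j<n. of_rat (q j) * E j) - (real mb - real ma) * E n"
    by (simp add: q'_def of_rat_diff algebra_simps)
  also have "\<dots> = 0" using q by simp
  finally have "\<forall>j<N. q' j = 0" by (rule linindep)
  then have "q' n = 0" using assms(2) by auto
  then show False using assms(3) by (simp add: q'_def)
qed

lemma avg_G_diag:
  fixes E :: "nat \<Rightarrow> real"
  assumes linindep: "\<And>q :: nat \<Rightarrow> rat. (\<Sum>j<N. of_rat (q j) * E j) = 0 \<Longrightarrow> (\<forall>j<N. q j = 0)"
  shows "n \<le> N \<Longrightarrow> (avg_T (Gf n d E k k 0) \<longlongrightarrow> complex_of_real (Jf d n k)) at_top"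
proof (induction n arbitrary: k)
  case 0
  show ?case
  proof (cases "k = 0")
    case True
    then have "Gf 0 d E k k 0 = (\<lambda>t. exp (\<i> * complex_of_real (t * 0)))"
      by (auto simp: Gf_def)
    then show ?thesis using avg_T_exp[of 0] True by simp
  next
    case False
    then have "Gf 0 d E k k 0 = (\<lambda>t. 0)"
      by (auto simp: Gf_def chi_def fun_eq_iff)
    then show ?thesis using False by (simp add: avg_T_def)
  qed
next
  case (Suc n)
  have lim: "(avg_T (Gf n d E p q (0 + (real (k-q) - real (k-p)) * E n)) \<longlongrightarrow>
      (if p = q then complex_of_real (Jf d n p) else 0)) at_top" if "p \<le> k" "q \<le> k" for p q
  proof (cases "p = q")
    case True
    then show ?thesis using Suc by simp
  next
    case False
    then have "k - p \<noteq> k - q" using that by auto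
    then show ?thesis using False avg_G_zero linindep_Sp[OF linindep, where n=n and ma="k-p" and mb="k-q"] Suc.prems by auto
  qed
  have "(avg_T (Gf (Suc n) d E k k 0) \<longlongrightarrow> (\<Sum>p\<le>k. \<Sum>q\<le>k. complex_of_real (real (k choose p) * real (k choose q) * d n ^ ((k-p)+(k-q)))
      * (if p = q then complex_of_real (Jf d n p) else 0))) at_top"
    unfolding avg_T_Gf_Suc by (intro tendsto_sum tendsto_mult tendsto_const lim) auto
  also have "(\<Sum>p\<le>k. \<Sum>q\<le>k. complex_of_real (real (k choose p) * real (k choose q) * d n ^ ((k-p)+(k-q)))
      * (if p = q then complex_of_real (Jf d n p) else 0)) = complex_of_real (Jf d (Suc n) k)"
    by (simp add: if_distrib[of "\<lambda>x. _ * x"] sum.delta cong: if_cong)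
  finally show ?case .
qed



lemma I0_summable: "summable (\<lambda>n. norm ((w::complex)^n / (of_nat (fact n))^2))"
proof (rule summable_comparison_test[OF _ summable_exp[of "norm w"]])
  show "\<exists>N. \<forall>n\<ge>N. norm (norm (w ^ n / (of_nat (fact n))\<^sup>2)) \<le> inverse (fact n) * norm w ^ n"
  proof (intro exI allI impI)
    fix n :: nat
    have f1: "(1::real) \<le> fact n" by simp
    have "norm w ^ n / (fact n)^2 \<le> norm w ^ n / fact n"
      by (rule divide_left_mono) (use f1 in \<open>auto simp: power2_eq_square\<close>)
    then show "norm (norm (w ^ n / (of_nat (fact n))\<^sup>2)) \<le> inverse (fact n) * norm w ^ n"
      by (simp add: norm_divide norm_power field_simps)
  qed
qed

lemma I0s_sums: "(\<lambda>n. (w::complex)^n / (of_nat (fact n))^2) sums I0s w"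
  unfolding I0s_def by (rule summable_sums[OF summable_norm_cancel[OF I0_summable]])

lemma isCont_I0s: "isCont I0s w"
proof -
  have s: "summable (\<lambda>n. 1 / (of_nat (fact n))^2 * (complex_of_real (norm w + 1)) ^ n)"
    using summable_norm_cancel[OF I0_summable[of "complex_of_real (norm w + 1)"]] by simp
  have "isCont (\<lambda>x. \<Sum>n. 1 / (of_nat (fact n))^2 * x ^ n) w"
    by (rule isCont_powser[OF s]) simp
  moreover have "(\<lambda>x. \<Sum>n. 1 / (of_nat (fact n))^2 * x ^ n) = I0s"
    by (simp add: I0s_def fun_eq_iff)
  ultimately show ?thesis by simp
qed

lemma continuous_on_I0s: "continuous_on UNIV g \<Longrightarrow> continuous_on UNIV (\<lambda>t. I0s (g t))"
  using continuous_on_compose2[of UNIV I0s UNIV g] isCont_I0s continuous_at_imp_continuous_on by blast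



lemma avg_T_diff:
  fixes f g :: "real \<Rightarrow> complex"
  assumes "continuous_on UNIV f" "continuous_on UNIV g"
  shows "avg_T (\<lambda>t. f t - g t) T = avg_T f T - avg_T g T"
proof -
  have "integral {0..T} (\<lambda>t. f t - g t) = integral {0..T} f - integral {0..T} g"
    by (rule integral_diff) (auto intro!: integrable_continuous_real continuous_on_subset[OF assms(1)] continuous_on_subset[OF assms(2)])
  then show ?thesis unfolding avg_T_def by (simp add: scaleR_diff_right)
qed

lemma tri3: "norm ((a::complex) - d) \<le> norm (a - b) + norm (b - c) + norm (c - d)"
proof -
  have "norm (a - d) = norm ((a - b) + (b - c) + (c - d))" by simp
  also have "\<dots> \<le> norm ((a - b) + (b - c)) + norm (c - d)" by (rule norm_triangle_ineq)
  also have "\<dots> \<le> norm (a - b) + norm (b - c) + norm (c - d)" using norm_triangle_ineq[of "a - b" "b - c"] by simp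
  finally show ?thesis .
qed

lemma avg_I0s_limit:
  fixes f :: "real \<Rightarrow> real" and J :: "nat \<Rightarrow> real" and z :: complex
  assumes cont: "continuous_on UNIV f" and bnd: "\<And>t. \<bar>f t\<bar> \<le> D"
    and mom: "\<And>k. (avg_T (\<lambda>t. complex_of_real (f t ^ (2*k))) \<longlongrightarrow> complex_of_real (J k)) at_top"
    and Jb: "\<And>k. \<bar>J k\<bar> \<le> D^(2*k)"
    and L: "(\<lambda>k. complex_of_real (J k) / (of_nat (fact k))^2 * z^k) sums L"
  shows "(avg_T (\<lambda>t. I0s (complex_of_real ((f t)^2) * z)) \<longlongrightarrow> L) at_top"
proof -
  have D0: "0 \<le> D" using bnd[of 0] by linarith
  define w0 where "w0 = complex_of_real (D^2) * z"
  define r where "r k = norm (w0^k / (of_nat (fact k))^2)" for k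
  have sr: "summable r" unfolding r_def by (rule I0_summable)
  define R where "R M = (\<Sum>k. r (k + M))" for M
  have R0: "R \<longlonglongrightarrow> 0"
  proof -
    have "R M = suminf r - (\<Sum>i<M. r i)" for M
      using suminf_split_initial_segment[OF sr, of M] unfolding R_def by simp
    then have "R = (\<lambda>M. suminf r - (\<Sum>i<M. r i))" by auto
    moreover have "(\<lambda>M. suminf r - (\<Sum>i<M. r i)) \<longlonglongrightarrow> suminf r - suminf r"
      by (intro tendsto_diff tendsto_const summable_LIMSEQ[OF sr])
    ultimately show ?thesis by simp
  qed
  define u where "u t k = z^k / (of_nat (fact k))^2 * complex_of_real (f t ^ (2*k))" for t k
  define b where "b k = complex_of_real (J k) / (of_nat (fact k))^2 * z^k" for k
  have rk: "r k = (D^2)^k * norm z ^ k / (fact k)^2" for k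
    unfolding r_def w0_def by (simp add: norm_divide norm_power norm_mult power_mult_distrib)
  have nu: "norm (u t k) \<le> r k" for t k
  proof -
    have "\<bar>f t\<bar>^(2*k) \<le> D^(2*k)" by (rule power_mono[OF bnd]) simp
    then have "\<bar>f t\<bar>^(2*k) * norm z ^ k / (fact k)^2 \<le> D^(2*k) * norm z ^ k / (fact k)^2"
      by (intro divide_right_mono mult_right_mono) auto
    moreover have "(D^2)^k = (D^k)^2" by (metis power_mult mult.commute)
    ultimately show ?thesis unfolding rk u_def
      by (simp add: norm_divide norm_power norm_mult power_mult power_abs mult_ac)
  qed
  have nb: "norm (b k) \<le> r k" for k
  proof -
    have "\<bar>J k\<bar> * norm z ^ k / (fact k)^2 \<le> D^(2*k) * norm z ^ k / (fact k)^2"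
      by (intro divide_right_mono mult_right_mono Jb) auto
    moreover have "(D^2)^k = (D^k)^2" by (metis power_mult mult.commute)
    ultimately show ?thesis unfolding rk b_def
      by (simp add: norm_divide norm_power norm_mult power_mult mult_ac)
  qed
  have su: "summable (u t)" for t
    by (rule summable_norm_cancel, rule summable_comparison_test[OF _ sr]) (use nu in auto)
  have sb: "summable b"
    by (rule summable_norm_cancel, rule summable_comparison_test[OF _ sr]) (use nb in auto)
  have hu: "I0s (complex_of_real ((f t)^2) * z) = suminf (u t)" for t
  proof -
    have "complex_of_real ((f t)^2) ^ k = complex_of_real (f t ^ (2*k))" for k
      by (simp only: of_real_power power_mult)
    then show ?thesis unfolding I0s_def u_def
      by (intro arg_cong[where f=suminf]) (simp add: fun_eq_iff power_mult_distrib)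
  qed
  have Lb: "L = suminf b" using L unfolding b_def by (simp add: sums_iff)
  have tail: "norm (suminf g - (\<Sum>k<M. g k)) \<le> R M" if "summable g" "\<And>k. norm (g k) \<le> r k" for g :: "nat \<Rightarrow> complex" and M
  proof -
    have "suminf g - (\<Sum>k<M. g k) = (\<Sum>k. g (k + M))"
      using suminf_split_initial_segment[OF that(1), of M] by simp
    also have "norm \<dots> \<le> R M"
      unfolding R_def by (rule norm_suminf_le[of "\<lambda>k. g (k+M)" "\<lambda>k. r (k+M)"]) (use that(2) summable_ignore_initial_segment[OF sr] in auto)
    finally show ?thesis .
  qed
  have contu: "continuous_on UNIV (\<lambda>t. u t k)" for k
    unfolding u_def by (intro continuous_intros cont)
  have conth: "continuous_on UNIV (\<lambda>t. I0s (complex_of_real ((f t)^2) * z))"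
    by (intro continuous_on_I0s continuous_intros cont)
  have part: "((\<lambda>T. avg_T (\<lambda>t. \<Sum>k<M. u t k) T) \<longlongrightarrow> (\<Sum>k<M. b k)) at_top" for M
  proof -
    have "avg_T (\<lambda>t. \<Sum>k<M. u t k) T = (\<Sum>k<M. z^k / (of_nat (fact k))^2 * avg_T (\<lambda>t. complex_of_real (f t ^ (2*k))) T)" for T
    proof -
      have "avg_T (\<lambda>t. \<Sum>k<M. u t k) T = (\<Sum>k<M. avg_T (\<lambda>t. u t k) T)"
        by (rule avg_T_sum) (auto simp: contu)
      then show ?thesis unfolding u_def by (simp only: avg_T_cmult)
    qed
    moreover have "b k = z^k / (of_nat (fact k))^2 * complex_of_real (J k)" for k
      unfolding b_def by simp
    ultimately show ?thesis
      by (simp only:) (intro tendsto_sum tendsto_mult tendsto_const mom)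
  qed
  show ?thesis
  proof (rule tendstoI)
    fix e :: real assume e: "e > 0"
    from R0 have "eventually (\<lambda>M. R M < e/3) sequentially"
      using e order_tendstoD(2)[OF R0, of "e/3"] by simp
    then obtain M where M: "R M < e/3" by (auto simp: eventually_sequentially)
    have ev: "eventually (\<lambda>T. dist (avg_T (\<lambda>t. \<Sum>k<M. u t k) T) (\<Sum>k<M. b k) < e/3) at_top"
      using tendstoD[OF part[of M], of "e/3"] e by simp
    show "eventually (\<lambda>T. dist (avg_T (\<lambda>t. I0s (complex_of_real ((f t)^2) * z)) T) L < e) at_top"
      using ev eventually_gt_at_top[of 0]
    proof eventually_elim
      case (elim T)
      let ?h = "\<lambda>t. I0s (complex_of_real ((f t)^2) * z)"
      let ?P = "\<lambda>t. \<Sum>k<M. u t k"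
      have "norm (avg_T ?h T - avg_T ?P T) = norm (avg_T (\<lambda>t. ?h t - ?P t) T)"
      proof -
        have cP: "continuous_on UNIV ?P" by (intro continuous_on_sum contu)
        show ?thesis by (simp only: avg_T_diff[OF conth cP])
      qed
      also have "\<dots> \<le> R M"
      proof (rule avg_T_bound)
        show "continuous_on UNIV (\<lambda>t. ?h t - ?P t)" by (intro continuous_on_diff conth continuous_on_sum contu)
        show "norm (?h t - ?P t) \<le> R M" for t unfolding hu by (rule tail[OF su nu])
      qed (use elim in auto)
      finally have 1: "norm (avg_T ?h T - avg_T ?P T) \<le> R M" .
      have 2: "norm ((\<Sum>k<M. b k) - L) \<le> R M"
        using tail[OF sb nb, of M] unfolding Lb by (simp add: norm_minus_commute)
      have "dist (avg_T ?h T) L \<le> norm (avg_T ?h T - avg_T ?P T) + dist (avg_T ?P T) (\<Sum>k<M. b k) + norm ((\<Sum>k<M. b k) - L)"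
        unfolding dist_norm by (rule tri3)
      also have "\<dots> < e" using 1 2 elim M by linarith
      finally show ?case .
    qed
  qed
qed



lemma fps_log_deriv:
  assumes "fps_nth M 0 = 1"
  shows "fps_deriv (fps_log M) = fps_deriv M * inverse M"
proof -
  have b0: "fps_nth (M - 1) 0 = 0" using assms by simp
  have c: "(1 + fps_X) oo (M - 1) = M"
    using b0 by (simp add: fps_compose_add_distrib)
  have "fps_deriv (fps_log M) = (fps_deriv (fps_ln 1) oo (M - 1)) * fps_deriv (M - 1)"
    unfolding fps_log_def by (rule fps_compose_deriv[OF b0])
  also have "fps_deriv (fps_ln (1::real)) = inverse (1 + fps_X)"
    by (simp add: fps_ln_deriv)
  also have "inverse (1 + fps_X) oo (M - 1) = inverse ((1 + fps_X) oo (M - 1))"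
    by (rule fps_inverse_compose[OF b0]) simp
  finally show ?thesis using c by (simp add: mult.commute)
qed

lemma fps_log_0: "fps_nth (fps_log M) 0 = 0"
  unfolding fps_log_def by simp

lemma fps_log_mult:
  assumes "fps_nth M 0 = 1" "fps_nth A 0 = 1"
  shows "fps_log (M * A) = fps_log M + fps_log A"
proof -
  have MA: "fps_nth (M * A) 0 = 1" using assms by simp
  have iM: "M * inverse M = 1" using assms by (intro inverse_mult_eq_1') simp
  have iA: "A * inverse A = 1" using assms by (intro inverse_mult_eq_1') simp
  have "fps_deriv (fps_log (M * A)) = (fps_deriv M * A + M * fps_deriv A) * (inverse M * inverse A)"
    by (simp add: fps_log_deriv[OF MA] fps_inverse_mult)
  also have "\<dots> = fps_deriv M * inverse M * (A * inverse A) + fps_deriv A * inverse A * (M * inverse M)"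
    by (simp add: algebra_simps)
  also have "\<dots> = fps_deriv (fps_log M + fps_log A)"
    by (simp add: iM iA fps_log_deriv assms)
  finally show ?thesis unfolding fps_deriv_eq_iff by (simp add: fps_log_0)
qed

lemma fps_log_1: "fps_log 1 = 0"
  unfolding fps_log_def by simp

lemma fps_log_scale:
  assumes "fps_nth A 0 = 1"
  shows "fps_log (A oo (fps_const c * fps_X)) = fps_log A oo (fps_const c * fps_X)"
proof -
  have "(A oo (fps_const c * fps_X)) - 1 = (A - 1) oo (fps_const c * fps_X)"
    by (simp add: fps_compose_sub_distrib)
  then show ?thesis unfolding fps_log_def
    by (simp add: fps_compose_assoc assms)
qed



lemma Jf_0: "Jf d n 0 = 1"
  by (induction n) auto

lemma Jf_Suc_div: "Jf d (Suc n) k / (fact k)^2 = (\<Sum>p\<le>k. Jf d n p / (fact p)^2 * ((d n)^2)^(k-p) / (fact (k-p))^2)"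
proof -
  have "Jf d (Suc n) k / (fact k)^2 = (\<Sum>p\<le>k. real (k choose p) * real (k choose p) * d n ^ ((k-p)+(k-p)) * Jf d n p / (fact k)^2)"
    by (simp add: sum_divide_distrib)
  also have "\<dots> = (\<Sum>p\<le>k. Jf d n p / (fact p)^2 * ((d n)^2)^(k-p) / (fact (k-p))^2)"
  proof (intro sum.cong refl)
    fix p assume "p \<in> {..k}"
    then have pk: "p \<le> k" by simp
    have b: "real (k choose p) = fact k / (fact p * fact (k - p))"
      using binomial_fact[OF pk] by simp
    have e: "d n ^ ((k-p)+(k-p)) = ((d n)^2)^(k-p)"
      by (simp add: power_add power_mult[symmetric] mult_2[symmetric] mult.commute)
    show "real (k choose p) * real (k choose p) * d n ^ ((k-p)+(k-p)) * Jf d n p / (fact k)^2 =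
          Jf d n p / (fact p)^2 * ((d n)^2)^(k-p) / (fact (k-p))^2"
      unfolding b e by (simp add: field_simps power2_eq_square)
  qed
  finally show ?thesis .
qed

lemma norm_chi: "cmod (chi n d E t) \<le> (\<Sum>j<n. \<bar>d j\<bar>)"
proof -
  have "cmod (chi n d E t) \<le> (\<Sum>j<n. cmod (complex_of_real (d j) * exp (- \<i> * complex_of_real (t * E j))))"
    unfolding chi_def by (rule norm_sum)
  also have "\<dots> = (\<Sum>j<n. \<bar>d j\<bar>)"
    by (intro sum.cong refl) (simp add: norm_mult)
  finally show ?thesis .
qed

lemma Gf_diag: "Gf n d E k k 0 t = complex_of_real (cmod (chi n d E t) ^ (2*k))"
proof -
  have "Gf n d E k k 0 t = (chi n d E t * cnj (chi n d E t)) ^ k"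
    unfolding Gf_def by (simp add: power_mult_distrib)
  also have "\<dots> = complex_of_real ((cmod (chi n d E t))^2) ^ k"
    by (simp only: complex_norm_square)
  also have "\<dots> = complex_of_real (cmod (chi n d E t) ^ (2*k))"
    by (simp only: of_real_power power_mult)
  finally show ?thesis .
qed

lemma Jf_bound:
  fixes E :: "nat \<Rightarrow> real"
  assumes linindep: "\<And>q :: nat \<Rightarrow> rat. (\<Sum>j<N. of_rat (q j) * E j) = 0 \<Longrightarrow> (\<forall>j<N. q j = 0)"
    and "n \<le> N"
  shows "\<bar>Jf d n k\<bar> \<le> (\<Sum>j<n. \<bar>d j\<bar>) ^ (2*k)"
proof -
  have "norm (complex_of_real (Jf d n k)) \<le> (\<Sum>j<n. \<bar>d j\<bar>) ^ (2*k)"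
  proof (rule Lim_norm_ubound[OF _ avg_G_diag[OF linindep assms(2)]])
    show "eventually (\<lambda>T. norm (avg_T (Gf n d E k k 0) T) \<le> (\<Sum>j<n. \<bar>d j\<bar>) ^ (2*k)) at_top"
      using eventually_gt_at_top[of 0]
    proof eventually_elim
      case (elim T)
      show ?case
      proof (rule avg_T_bound[OF continuous_Gf _ elim])
        fix t
        show "norm (Gf n d E k k 0 t) \<le> (\<Sum>j<n. \<bar>d j\<bar>) ^ (2*k)"
          unfolding Gf_diag by (simp add: norm_power) (intro power_mono norm_chi, simp)
      qed
    qed
  qed simp
  then show ?thesis by simp
qed



lemma Jf_sums:
  fixes E :: "nat \<Rightarrow> real" and z :: complex
  assumes linindep: "\<And>q :: nat \<Rightarrow> rat. (\<Sum>j<N. of_rat (q j) * E j) = 0 \<Longrightarrow> (\<forall>j<N. q j = 0)"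
  shows "n \<le> N \<Longrightarrow> (\<lambda>k. complex_of_real (Jf d n k) / (of_nat (fact k))\<^sup>2 * z ^ k) sums (\<Prod>i<n. I0s (complex_of_real ((d i)\<^sup>2) * z))"
proof (induction n)
  case 0
  have "(\<lambda>k. complex_of_real (Jf d 0 k) / (of_nat (fact k))\<^sup>2 * z ^ k) = (\<lambda>k. if k = 0 then 1 else 0)"
    by (auto simp: fun_eq_iff)
  then show ?case using sums_single[of 0 "\<lambda>_. 1::complex"] by simp
next
  case (Suc n)
  define a where "a k = complex_of_real (Jf d n k) / (of_nat (fact k))\<^sup>2 * z ^ k" for k
  define b where "b k = (complex_of_real ((d n)\<^sup>2) * z) ^ k / (of_nat (fact k))\<^sup>2" for k
  have sa: "a sums (\<Prod>i<n. I0s (complex_of_real ((d i)\<^sup>2) * z))" unfolding a_def using Suc by simp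
  define D where "D = (\<Sum>j<n. \<bar>d j\<bar>)"
  have D0: "0 \<le> D" unfolding D_def by (simp add: sum_nonneg)
  have nsa: "summable (\<lambda>k. norm (a k))"
  proof (rule summable_comparison_test[OF _ I0_summable[of "complex_of_real (D^2) * z"]], intro exI allI impI)
    fix k :: nat
    have "\<bar>Jf d n k\<bar> * norm z ^ k / (fact k)^2 \<le> D ^ (2*k) * norm z ^ k / (fact k)^2"
      unfolding D_def by (intro divide_right_mono mult_right_mono Jf_bound[OF linindep]) (use Suc in auto)
    moreover have "(D^2)^k = D ^ (2*k)" by (simp add: power_mult)
    moreover have "norm ((complex_of_real (D^2) * z) ^ k / (of_nat (fact k))\<^sup>2) = (D^2)^k * norm z ^ k / (fact k)^2"
      using D0 by (simp add: norm_divide norm_power norm_mult power_mult_distrib)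
    ultimately show "norm (norm (a k)) \<le> norm ((complex_of_real (D^2) * z) ^ k / (of_nat (fact k))\<^sup>2)"
      unfolding a_def by (simp add: norm_divide norm_power norm_mult mult_ac)
  qed
  have sb: "b sums I0s (complex_of_real ((d n)\<^sup>2) * z)" unfolding b_def by (rule I0s_sums)
  have nsb: "summable (\<lambda>k. norm (b k))" unfolding b_def by (rule I0_summable)
  have "(\<lambda>k. \<Sum>i\<le>k. a i * b (k - i)) sums (suminf a * suminf b)"
    by (rule Cauchy_product_sums[OF nsa nsb])
  moreover have "suminf a * suminf b = (\<Prod>i<Suc n. I0s (complex_of_real ((d i)\<^sup>2) * z))"
    using sa sb by (simp add: sums_iff)
  moreover have "(\<Sum>i\<le>k. a i * b (k - i)) = complex_of_real (Jf d (Suc n) k) / (of_nat (fact k))\<^sup>2 * z ^ k" for k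
  proof -
    have "complex_of_real (Jf d (Suc n) k) / (of_nat (fact k))\<^sup>2 * z ^ k
       = complex_of_real (Jf d (Suc n) k / (fact k)^2) * z ^ k" by simp
    also have "\<dots> = (\<Sum>p\<le>k. complex_of_real (Jf d n p / (fact p)^2 * ((d n)^2)^(k-p) / (fact (k-p))^2) * z ^ k)"
      unfolding Jf_Suc_div by (simp add: sum_distrib_right)
    also have "\<dots> = (\<Sum>i\<le>k. a i * b (k - i))"
    proof (intro sum.cong refl)
      fix p assume "p \<in> {..k}"
      then have "z ^ k = z ^ p * z ^ (k - p)" by (simp add: power_add[symmetric])
      then show "complex_of_real (Jf d n p / (fact p)^2 * ((d n)^2)^(k-p) / (fact (k-p))^2) * z ^ k = a p * b (k - p)"
        unfolding a_def b_def by (simp add: power_mult_distrib field_simps)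
    qed
    finally show ?thesis by simp
  qed
  ultimately show ?case by simp
qed

definition Afps :: "real \<Rightarrow> real fps" where
  "Afps c = Abs_fps (\<lambda>k. c ^ k / (fact k)^2)"

definition Mfps :: "(nat \<Rightarrow> real) \<Rightarrow> nat \<Rightarrow> real fps" where
  "Mfps d n = Abs_fps (\<lambda>k. Jf d n k / (fact k)^2)"

lemma Mfps_Suc: "Mfps d (Suc n) = Mfps d n * Afps ((d n)^2)"
  unfolding Mfps_def Afps_def
  by (rule fps_ext, simp only: fps_mult_nth fps_nth_Abs_fps atLeast0AtMost Jf_Suc_div) (intro sum.cong refl, simp)

lemma Mfps_0: "Mfps d 0 = 1"
  unfolding Mfps_def by (rule fps_ext) simp

lemma log_Mfps: "fps_log (Mfps d n) = (\<Sum>i<n. fps_log (Afps ((d i)^2)))"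
proof (induction n)
  case 0 then show ?case by (simp add: Mfps_0 fps_log_1)
next
  case (Suc n)
  have "fps_nth (Mfps d n) 0 = 1" by (simp add: Mfps_def Jf_0)
  moreover have "fps_nth (Afps c) 0 = 1" for c by (simp add: Afps_def)
  ultimately show ?case by (simp add: Mfps_Suc fps_log_mult Suc)
qed

lemma log_Afps_nth: "fps_nth (fps_log (Afps c)) m = c ^ m * fps_nth (fps_log (Abs_fps (\<lambda>k. 1 / (fact k)\<^sup>2))) m"
proof -
  have "Afps c = Abs_fps (\<lambda>k. 1 / (fact k)\<^sup>2) oo (fps_const c * fps_X)"
    unfolding Afps_def fps_compose_linear by (rule fps_ext) simp
  then have "fps_log (Afps c) = fps_log (Abs_fps (\<lambda>k. 1 / (fact k)\<^sup>2)) oo (fps_const c * fps_X)"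
    by (simp add: fps_log_scale)
  then show ?thesis by (simp add: fps_compose_linear)
qed



theorem mainTheorem8:
  fixes N :: nat and E d :: "nat \<Rightarrow> real"
  assumes linindep: "\<And>q :: nat \<Rightarrow> rat. (\<Sum>j<N. of_rat (q j) * E j) = 0 \<Longrightarrow> (\<forall>j<N. q j = 0)"
      and dpos: "\<And>j. j < N \<Longrightarrow> d j > 0"
  defines "I \<equiv> (\<lambda>k::nat. time_avg (\<lambda>t. cmod (chi N d E t) ^ (2 * k)))"
  shows "(\<forall>k. (avg_T (\<lambda>t. cmod (chi N d E t) ^ (2 * k)) \<longlongrightarrow> I k) at_top)
    \<and> I 0 = 1
    \<and> (\<forall>z::complex.
         (\<lambda>k. complex_of_real (I k) / (of_nat (fact k))\<^sup>2 * z ^ k) sums (\<Prod>i<N. I0s (complex_of_real ((d i)\<^sup>2) * z))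
       \<and> (avg_T (\<lambda>t. I0s (complex_of_real ((cmod (chi N d E t))\<^sup>2) * z))
            \<longlongrightarrow> (\<Prod>i<N. I0s (complex_of_real ((d i)\<^sup>2) * z))) at_top)
    \<and> (\<forall>n\<ge>1. cumulant (\<lambda>k. I k / fact k) n = a_coef n * (\<Sum>i<N. d i ^ (2 * n)))"
proof -
  have contc: "continuous_on UNIV (\<lambda>t. cmod (chi N d E t))"
    unfolding chi_def by (intro continuous_intros)
  have cmom: "(avg_T (\<lambda>t. complex_of_real (cmod (chi N d E t) ^ (2 * k))) \<longlongrightarrow> complex_of_real (Jf d N k)) at_top" for k
  proof -
    have "(\<lambda>t. complex_of_real (cmod (chi N d E t) ^ (2 * k))) = Gf N d E k k 0"
      by (simp add: fun_eq_iff Gf_diag)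
    then show ?thesis using avg_G_diag[OF linindep order_refl] by simp
  qed
  have rmom: "(avg_T (\<lambda>t. cmod (chi N d E t) ^ (2 * k)) \<longlongrightarrow> Jf d N k) at_top" for k
  proof -
    have "avg_T (\<lambda>t. complex_of_real (cmod (chi N d E t) ^ (2 * k))) = (\<lambda>T. complex_of_real (avg_T (\<lambda>t. cmod (chi N d E t) ^ (2 * k)) T))"
      by (rule ext, rule avg_T_of_real) (intro continuous_intros contc)
    with cmom[of k] have "((\<lambda>T. complex_of_real (avg_T (\<lambda>t. cmod (chi N d E t) ^ (2 * k)) T)) \<longlongrightarrow> complex_of_real (Jf d N k)) at_top"
      by metis
    then show ?thesis by (simp only: tendsto_of_real_iff)
  qed
  have IJ: "I k = Jf d N k" for k
    unfolding I_def time_avg_def by (rule tendsto_Lim[OF trivial_limit_at_top_linorder rmom])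
  have IJ': "I = Jf d N" using IJ by auto
  have part1: "\<forall>k. (avg_T (\<lambda>t. cmod (chi N d E t) ^ (2 * k)) \<longlongrightarrow> I k) at_top"
    using rmom IJ by simp
  have part2: "I 0 = 1" using IJ Jf_0 by simp
  have part3: "(\<lambda>k. complex_of_real (I k) / (of_nat (fact k))\<^sup>2 * z ^ k) sums (\<Prod>i<N. I0s (complex_of_real ((d i)\<^sup>2) * z))
       \<and> (avg_T (\<lambda>t. I0s (complex_of_real ((cmod (chi N d E t))\<^sup>2) * z))
            \<longlongrightarrow> (\<Prod>i<N. I0s (complex_of_real ((d i)\<^sup>2) * z))) at_top" for z :: complex
  proof
    show s: "(\<lambda>k. complex_of_real (I k) / (of_nat (fact k))\<^sup>2 * z ^ k) sums (\<Prod>i<N. I0s (complex_of_real ((d i)\<^sup>2) * z))"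
      unfolding IJ' by (rule Jf_sums[OF linindep order_refl])
    show "(avg_T (\<lambda>t. I0s (complex_of_real ((cmod (chi N d E t))\<^sup>2) * z))
            \<longlongrightarrow> (\<Prod>i<N. I0s (complex_of_real ((d i)\<^sup>2) * z))) at_top"
    proof (rule avg_I0s_limit[OF contc _ cmom])
      show "\<bar>cmod (chi N d E t)\<bar> \<le> (\<Sum>j<N. \<bar>d j\<bar>)" for t using norm_chi by simp
      show "\<bar>Jf d N k\<bar> \<le> (\<Sum>j<N. \<bar>d j\<bar>) ^ (2 * k)" for k by (rule Jf_bound[OF linindep order_refl])
      show "(\<lambda>k. complex_of_real (Jf d N k) / (of_nat (fact k))\<^sup>2 * z ^ k) sums (\<Prod>i<N. I0s (complex_of_real ((d i)\<^sup>2) * z))"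
        using s unfolding IJ' .
    qed
  qed
  have part4: "cumulant (\<lambda>k. I k / fact k) n = a_coef n * (\<Sum>i<N. d i ^ (2 * n))" for n
  proof -
    have "Abs_fps (\<lambda>k. I k / fact k / fact k) = Mfps d N"
      unfolding Mfps_def IJ' by (simp add: power2_eq_square)
    then have "cumulant (\<lambda>k. I k / fact k) n = fact n * fps_nth (fps_log (Mfps d N)) n"
      unfolding cumulant_def by simp
    also have "\<dots> = (\<Sum>i<N. fact n * ((d i)^2) ^ n * fps_nth (fps_log (Abs_fps (\<lambda>k. 1 / (fact k)\<^sup>2))) n)"
      by (simp add: log_Mfps fps_sum_nth log_Afps_nth sum_distrib_left mult_ac)
    also have "\<dots> = a_coef n * (\<Sum>i<N. d i ^ (2 * n))"
    proof -
      have "((d i)^2) ^ n = d i ^ (2 * n)" for i by (simp add: power_mult)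
      then show ?thesis unfolding a_coef_def by (simp add: sum_distrib_left sum_distrib_right mult_ac)
    qed
    finally show ?thesis .
  qed
  show ?thesis using part1 part2 part3 part4 by blast
qed


end
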